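(* Let $F=\langle f_1,\ldots,f_k\rangle$ be a normalized solution to an instance $(\mathcal{T}_{initial},\mathcal{T}_{final},k)$ of Flip Distance, and let $C$ be a component of $\mathcal{D}_F$. Let $f_i$ and $f_h$, with $i<h$, be two flips in $C$. If $\phi(f_i)=\epsilon(f_h)$, or if $\phi(f_i)$ and $\epsilon(f_h)$ share a triangle $T$ in $\mathcal{T}_j$ for some $j$ with $i\le j<h$, then there is a directed path from $f_i$ to $f_h$ in $C$.
   Context: A triangulation of a finite point set $\mathcal{P}$ in the plane is a partition of the convex hull of $\mathcal{P}$ into triangles whose vertex set is $\mathcal{P}$. For an interior edge $e$ of a triangulation $\mathcal{T}$, the quadrilateral associated with $e$ is the union of the two triangles of $\mathcal{T}$ sharing $e$. A flip $f$ with underlying edge $\epsilon(f)=e$ is admissible in $\mathcal{T}$ if $e\in\mathcal{T}$ and its associated quadrilateral is convex; performing it replaces $e$ by the other diagonal $\phi(f)$ of that quadrilateral. Two distinct edges share a triangle in $\mathcal{T}$ if they are edges of the same triangle of $\mathcal{T}$. A sequence $F=\langle f_1,\ldots,f_r\rangle$ is valid with respect to $\mathcal{T}$ if there are triangulations $\mathcal{T}_0=\mathcal{T},\mathcal{T}_1,\ldots,\mathcal{T}_r$ such that $f_i$ is admissible in $\mathcal{T}_{i-1}$ and performing it yields $\mathcal{T}_i$; then we write $\mathcal{T}\xrightarrow{F}\mathcal{T}_r$. Flips in a sequence are distinct objects even if they have the same underlying edge. For $1\le i<j\le r$, flip $f_j$ is adjacent to $f_i$ (written $f_i\to f_j$)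 if (1) either $\phi(f_i)=\epsilon(f_j)$ or $\phi(f_i)$ and $\epsilon(f_j)$ share a triangle in $\mathcal{T}_{j-1}$, and (2) there is no $p$ with $i<p<j$ and $\epsilon(f_p)=\phi(f_i)$. $\mathcal{D}_F$ is the directed acyclic graph whose nodes are the flips of $F$ and whose arcs are the pairs $f_i\to f_j$; a component of it is a weakly connected component. The flip distance between two triangulations is the minimum length of a valid sequence transforming one into the other. An instance $(\mathcal{T}_{initial},\mathcal{T}_{final},k)$ of Flip Distance consists of two triangulations of $\mathcal{P}$ and $k\in\mathbb{N}$; a solution is a valid sequence $F$ of length $k$ with $\mathcal{T}_{initial}\xrightarrow{F}\mathcal{T}_{final}$, where $k$ is the flip distance between them. For a solution $F=\langle f_1,\ldots,f_k\rangle$, $\mathcal{T}_j$ denotes the outcome of applying $\langle f_1,\ldots,f_j\rangle$ to $\mathcal{T}_{initial}$. A changed edge is an edge of $\mathcal{T}_{initial}$ not in $\mathcal{T}_{final}$; a component of $\mathcal{D}_F$ is essential if it contains a flip whose underlying edge is a changed edge. A solution $F$ is normalized if every component of $\mathcal{D}_F$ is essential and the flips of each component of $\mathcal{D}_F$ appear as a consecutive block in $F$. *)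

theory Defs
  imports "HOL-Analysis.Analysis"
begin

type_synonym pt = "real \<times> real"
type_synonym triangle = "pt set"
type_synonym edge = "pt set"
(* a flip is recorded as the pair (underlying edge epsilon(f), new diagonal phi(f)) *)
type_synonym flip = "edge \<times> edge"

definition eps :: "flip \<Rightarrow> edge" where "eps f = fst f"
definition phi :: "flip \<Rightarrow> edge" where "phi f = snd f"

definition triangulation :: "pt set \<Rightarrow> triangle set \<Rightarrow> bool" where
  "triangulation P T \<longleftrightarrow> finite P \<and> finite T \<and>
     (\<forall>t\<in>T. t \<subseteq> P \<and> card t = 3 \<and> \<not> collinear t) \<and>
     (\<forall>t1\<in>T. \<forall>t2\<in>T. convex hull t1 \<inter> convex hull t2 = convex hull (t1 \<inter> t2)) \<and>
     \<Union> ((\<lambda>t. convex hull t) ` T) = convex hull P \<and>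
     \<Union> T = P"

definition edges :: "triangle set \<Rightarrow> edge set" where
  "edges T = {e. card e = 2 \<and> (\<exists>t\<in>T. e \<subseteq> t)}"

definition share_triangle :: "triangle set \<Rightarrow> edge \<Rightarrow> edge \<Rightarrow> bool" where
  "share_triangle T e1 e2 \<longleftrightarrow> e1 \<noteq> e2 \<and> card e1 = 2 \<and> card e2 = 2 \<and>
     (\<exists>t\<in>T. e1 \<subseteq> t \<and> e2 \<subseteq> t)"

definition convex_quad :: "pt set \<Rightarrow> pt set \<Rightarrow> bool" where
  "convex_quad t1 t2 \<longleftrightarrow> convex (convex hull t1 \<union> convex hull t2) \<and>
     (\<forall>v \<in> t1 \<union> t2. v \<notin> convex hull ((t1 \<union> t2) - {v}))"

definition admissible :: "pt set \<Rightarrow> triangle set \<Rightarrow> flip \<Rightarrow> bool" where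
  "admissible P T f \<longleftrightarrow> triangulation P T \<and> eps f \<in> edges T \<and>
     (\<exists>c d. c \<noteq> d \<and> c \<notin> eps f \<and> d \<notin> eps f \<and> phi f = {c, d} \<and>
        insert c (eps f) \<in> T \<and> insert d (eps f) \<in> T \<and>
        convex_quad (insert c (eps f)) (insert d (eps f)))"

definition perform :: "triangle set \<Rightarrow> flip \<Rightarrow> triangle set" where
  "perform T f = (T - {t. eps f \<subseteq> t}) \<union> {insert x (phi f) | x. x \<in> eps f}"

text \<open>Valid sequence (0-based): Ts ! j is the triangulation T_j; flip F ! i (the paper's
  f_(i+1)) is admissible in Ts ! i and yields Ts ! (i+1).\<close>
definition valid_seq :: "pt set \<Rightarrow> triangle set \<Rightarrow> flip list \<Rightarrow> triangle set list \<Rightarrow> bool" where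
  "valid_seq P T F Ts \<longleftrightarrow> length Ts = Suc (length F) \<and> Ts ! 0 = T \<and>
     (\<forall>i < length F. admissible P (Ts ! i) (F ! i) \<and> Ts ! Suc i = perform (Ts ! i) (F ! i))"

text \<open>Arcs of D_F on 0-based indices: (i,j) is an arc iff the paper's f_(i+1) -> f_(j+1).
  The paper's T_(j-1) (for 1-based j) is Ts ! j for 0-based j.\<close>
definition arcs :: "flip list \<Rightarrow> triangle set list \<Rightarrow> (nat \<times> nat) set" where
  "arcs F Ts = {(i, j). i < j \<and> j < length F \<and>
      (phi (F ! i) = eps (F ! j) \<or> share_triangle (Ts ! j) (phi (F ! i)) (eps (F ! j))) \<and>
      \<not> (\<exists>p. i < p \<and> p < j \<and> eps (F ! p) = phi (F ! i))}"

definition is_component :: "flip list \<Rightarrow> triangle set list \<Rightarrow> nat set \<Rightarrow> bool" where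
  "is_component F Ts C \<longleftrightarrow> (\<exists>i0 < length F.
      C = {j. (i0, j) \<in> (arcs F Ts \<union> (arcs F Ts)\<inverse>)\<^sup>*})"

definition solution :: "pt set \<Rightarrow> triangle set \<Rightarrow> triangle set \<Rightarrow> nat \<Rightarrow> flip list \<Rightarrow> triangle set list \<Rightarrow> bool" where
  "solution P Ti Tf k F Ts \<longleftrightarrow> valid_seq P Ti F Ts \<and> last Ts = Tf \<and> length F = k \<and>
     (\<forall>G Gs. valid_seq P Ti G Gs \<and> last Gs = Tf \<longrightarrow> k \<le> length G)"

definition changed_edges :: "triangle set \<Rightarrow> triangle set \<Rightarrow> edge set" where
  "changed_edges Ti Tf = edges Ti - edges Tf"

definition normalized :: "triangle set \<Rightarrow> triangle set \<Rightarrow> flip list \<Rightarrow> triangle set list \<Rightarrow> bool" where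
  "normalized Ti Tf F Ts \<longleftrightarrow> (\<forall>C. is_component F Ts C \<longrightarrow>
      (\<exists>i\<in>C. eps (F ! i) \<in> changed_edges Ti Tf) \<and> (\<exists>a b. C = {a..<b}))"

end

theory Submission
  imports Defs
begin

definition det2 :: "pt \<Rightarrow> pt \<Rightarrow> real" where
  "det2 a b = fst a * snd b - snd a * fst b"

lemma det0_collinear:
  assumes "det2 (y - x) (u - x) = 0"
  shows "collinear {x, y, u}"
proof (cases "y = x")
  case True thus ?thesis by (simp add: insert_commute)
next
  case False
  define a1 where "a1 = fst y - fst x"
  define a2 where "a2 = snd y - snd x"
  define b1 where "b1 = fst u - fst x"
  define b2 where "b2 = snd u - snd x"
  have nz: "a1^2 + a2^2 \<noteq> 0" using False
    by (metis a1_def a2_def prod_eq_iff eq_iff_diff_eq_0 sum_power2_eq_zero_iff)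
  have d: "a1 * b2 = a2 * b1" using assms by (simp add: det2_def a1_def a2_def b1_def b2_def)
  define c where "c = (a1*b1 + a2*b2)/(a1^2+a2^2)"
  have c1: "c * a1 = b1" unfolding c_def using nz d
    by (simp add: field_simps power2_eq_square)
  have c2: "c * a2 = b2" unfolding c_def using nz d
    by (simp add: field_simps power2_eq_square)
  have "u = c *\<^sub>R y + (1 - c) *\<^sub>R x"
    using c1 c2 by (simp add: prod_eq_iff a1_def a2_def b1_def b2_def algebra_simps)
  hence "collinear {y, u, x}" using collinear_3_expand by blast
  thus ?thesis by (simp add: insert_commute)
qed

lemma det2_eq_zero_if_seg:
  assumes "q \<in> convex hull {x, y}"
  shows "det2 (y - x) (q - x) = 0"
proof -
  from assms obtain r where q: "q = (1 - r) *\<^sub>R x + r *\<^sub>R y"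
    unfolding segment_convex_hull[symmetric] closed_segment_def by blast
  show ?thesis unfolding q det2_def by (simp add: algebra_simps)
qed

lemma face_mid:
  fixes t S :: "pt set"
  assumes "card t = 3" "\<not> collinear t" "a \<in> t" "b \<in> t" "a \<noteq> b" "S \<subseteq> t"
    "(1/2) *\<^sub>R (a + b) \<in> convex hull S"
  shows "a \<in> S"
proof (rule ccontr)
  assume aS: "a \<notin> S"
  obtain w where t: "t = {a, b, w}"
  proof -
    have "card (t - {a, b}) = 1" using assms(1,3,4,5) by (simp add: card_Diff_subset)
    then obtain w where "t - {a,b} = {w}" by (meson card_1_singletonE)
    hence "t = {a,b,w}" using assms(3,4) by blast
    thus ?thesis using that by blast
  qed
  have "S \<subseteq> {b, w}" using aS assms(6) t by blast
  hence "convex hull S \<subseteq> convex hull {b, w}" by (rule hull_mono)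
  hence "(1/2) *\<^sub>R (a + b) \<in> convex hull {b, w}" using assms(7) by blast
  hence "det2 (w - b) ((1/2) *\<^sub>R (a + b) - b) = 0" by (rule det2_eq_zero_if_seg)
  moreover have "det2 (w - b) (a - b) = 2 * det2 (w - b) ((1/2) *\<^sub>R (a + b) - b)"
    by (simp add: det2_def field_simps)
  ultimately have "det2 (w - b) (a - b) = 0" by simp
  hence "collinear {b, w, a}" by (rule det0_collinear)
  hence "collinear t" using t by (simp add: insert_commute)
  thus False using assms(2) by blast
qed

lemma cr0: fixes D p N1 N2 a b :: real
  assumes "D \<noteq> 0" "p * D = N1 * a + N2 * b"
  shows "p = (N1 / D) * a + (N2 / D) * b"
  using assms by (simp add: field_simps)
lemma cr1: fixes ua va ub vb up vp :: real
  assumes "ua * vb - va * ub \<noteq> 0"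
  shows "up = ((up * vb - vp * ub) / (ua * vb - va * ub)) * ua + ((ua * vp - va * up) / (ua * vb - va * ub)) * ub"
    "vp = ((up * vb - vp * ub) / (ua * vb - va * ub)) * va + ((ua * vp - va * up) / (ua * vb - va * ub)) * vb"
proof -
  have "up * (ua * vb - va * ub) = (up * vb - vp * ub) * ua + (ua * vp - va * up) * ub" by algebra
  thus "up = ((up * vb - vp * ub) / (ua * vb - va * ub)) * ua + ((ua * vp - va * up) / (ua * vb - va * ub)) * ub"
    using assms cr0 by blast
  have "vp * (ua * vb - va * ub) = (up * vb - vp * ub) * va + (ua * vp - va * up) * vb" by algebra
  thus "vp = ((up * vb - vp * ub) / (ua * vb - va * ub)) * va + ((ua * vp - va * up) / (ua * vb - va * ub)) * vb"
    using assms cr0 by blast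
qed
lemma cramer:
  assumes "det2 a b \<noteq> 0"
  shows "p = (det2 p b / det2 a b) *\<^sub>R a + (det2 a p / det2 a b) *\<^sub>R b"
  using assms cr1[where ua="fst a" and va="snd a" and ub="fst b" and vb="snd b" and up="fst p" and vp="snd p"] unfolding prod_eq_iff det2_def
  by (simp add: mult.commute)

lemma same_side:
  assumes tri: "\<forall>t1\<in>T. \<forall>t2\<in>T. convex hull t1 \<inter> convex hull t2 = convex hull (t1 \<inter> t2)"
    and iu: "insert u {x, y} \<in> T" and iv: "insert v {x, y} \<in> T"
    and nu: "u \<notin> {x, y}" and nv: "v \<notin> {x, y}"
    and pos: "det2 (y - x) (u - x) * det2 (y - x) (v - x) > 0"
  shows "u = v"
proof (rule ccontr)
  assume uv: "u \<noteq> v"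
  define Du where "Du = det2 (y - x) (u - x)"
  define Dv where "Dv = det2 (y - x) (v - x)"
  define E where "E = det2 (u - x) (v - x)"
  have Dv0: "Dv \<noteq> 0" and Du0: "Du \<noteq> 0" using pos by (auto simp: Du_def Dv_def)
  have DuDv: "Du / Dv > 0" using pos by (simp add: Du_def Dv_def zero_less_divide_iff zero_less_mult_iff)
  define K where "K = (\<bar>E\<bar> + \<bar>Du\<bar>) / \<bar>Dv\<bar>"
  have K0: "K \<ge> 0" by (simp add: K_def)
  define s where "s = 1 / (4 * (K + 1))"
  have s0: "s > 0" "s \<le> 1/4" using K0 by (auto simp: s_def field_simps)
  have sK: "s * K \<le> 1/4" using K0 by (simp add: s_def field_simps)
  define q where "q = ((1 - s)/2) *\<^sub>R x + ((1 - s)/2) *\<^sub>R y + s *\<^sub>R u"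
  define al where "al = (1 - s)/2 + s * E / Dv"
  define be where "be = s * Du / Dv"
  have bnd1: "\<bar>s * E / Dv\<bar> \<le> 1/4"
  proof -
    have "\<bar>s * E / Dv\<bar> = s * (\<bar>E\<bar> / \<bar>Dv\<bar>)" using s0 by (simp add: abs_mult abs_divide)
    also have "\<dots> \<le> s * K" using s0 Dv0 by (intro mult_left_mono) (auto simp: K_def divide_right_mono)
    finally show ?thesis using sK by linarith
  qed
  have bnd2: "be \<le> 1/4"
  proof -
    have "be = s * (\<bar>Du\<bar> / \<bar>Dv\<bar>)" using DuDv s0 unfolding be_def
      by (metis abs_divide abs_of_pos times_divide_eq_right)
    also have "\<dots> \<le> s * K" using s0 Dv0 by (intro mult_left_mono) (auto simp: K_def divide_right_mono)
    finally show ?thesis using sK by linarith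
  qed
  have be0: "be \<ge> 0"
  proof -
    have "s * (Du / Dv) > 0" using mult_pos_pos[OF s0(1) DuDv] .
    thus ?thesis unfolding be_def by simp
  qed
  have b1: "s * E / Dv \<le> 1/4" "- (s * E / Dv) \<le> 1/4" using abs_le_D1[OF bnd1] abs_le_D2[OF bnd1] by auto
  have aux1: "\<And>z. - (z::real) \<le> 1/4 \<Longrightarrow> s \<le> 1/4 \<Longrightarrow> 0 \<le> (1 - s) / 2 + z" by (simp add: field_simps)
  have aux2: "\<And>z b. (z::real) \<le> 1/4 \<Longrightarrow> (b::real) \<le> 1/4 \<Longrightarrow> 0 < s \<Longrightarrow> (1 - s) / 2 + z + b \<le> 1"
    by (simp add: field_simps)
  have al0: "al \<ge> 0" using aux1[OF b1(2) s0(2)] unfolding al_def .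
  have albe: "al + be \<le> 1" using aux2[OF b1(1) bnd2 s0(1)] unfolding al_def .
  have q1: "q \<in> convex hull (insert u {x, y})"
    unfolding convex_hull_3 mem_Collect_eq
    apply (rule exI[where x=s], rule exI[where x="(1-s)/2"], rule exI[where x="(1-s)/2"])
    using s0 by (simp add: q_def algebra_simps)
  have qeq: "q = (1 - al - be) *\<^sub>R x + al *\<^sub>R y + be *\<^sub>R v"
  proof -
    have Dv': "det2 (y - x) (v - x) \<noteq> 0" using Dv0 Dv_def by simp
    have cr: "q - x = (det2 (q - x) (v - x) / Dv) *\<^sub>R (y - x) + (det2 (y - x) (q - x) / Dv) *\<^sub>R (v - x)"
      using cramer[OF Dv'] Dv_def by simp
    have d1: "det2 (q - x) (v - x) = ((1 - s)/2) * Dv + s * E"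
      unfolding q_def Dv_def E_def by (simp add: det2_def field_simps)
    have d2: "det2 (y - x) (q - x) = s * Du"
      unfolding q_def Du_def by (simp add: det2_def field_simps)
    have "det2 (q - x) (v - x) / Dv = al" unfolding d1 al_def using Dv0 by (simp add: add_divide_distrib)
    moreover have "det2 (y - x) (q - x) / Dv = be" unfolding d2 be_def by simp
    ultimately have "q - x = al *\<^sub>R (y - x) + be *\<^sub>R (v - x)" using cr by simp
    hence "q = x + al *\<^sub>R (y - x) + be *\<^sub>R (v - x)" by (simp add: algebra_simps)
    thus ?thesis by (simp add: algebra_simps)
  qed
  have q2: "q \<in> convex hull (insert v {x, y})"
    unfolding convex_hull_3 mem_Collect_eq
    apply (rule exI[where x=be], rule exI[where x="1 - al - be"], rule exI[where x=al])
    using al0 be0 albe qeq by (simp add: algebra_simps)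
  have "insert u {x, y} \<inter> insert v {x, y} = {x, y}" using uv nu nv by auto
  hence "q \<in> convex hull {x, y}" using tri iu iv q1 q2 by (metis IntI)
  hence "det2 (y - x) (q - x) = 0" by (rule det2_eq_zero_if_seg)
  moreover have "det2 (y - x) (q - x) = s * Du"
    unfolding q_def Du_def by (simp add: det2_def field_simps)
  ultimately show False using s0 Du0 by simp
qed


lemma three_tri:
  assumes tri: "triangulation P T" and ce: "card e = 2"
    and ic: "insert c e \<in> T" and id: "insert d e \<in> T" and iw: "insert w e \<in> T"
    and nc: "c \<notin> e" and nd: "d \<notin> e" and nw: "w \<notin> e" and cd: "c \<noteq> d"
  shows "w = c \<or> w = d"
proof -
  obtain x y where e: "e = {x, y}" and xy: "x \<noteq> y" using ce by (meson card_2_iff)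
  have hp: "\<forall>t1\<in>T. \<forall>t2\<in>T. convex hull t1 \<inter> convex hull t2 = convex hull (t1 \<inter> t2)"
    using tri unfolding triangulation_def by blast
  have nz: "det2 (y - x) (z - x) \<noteq> 0" if "insert z e \<in> T" for z
  proof
    assume "det2 (y - x) (z - x) = 0"
    hence "collinear {x, y, z}" by (rule det0_collinear)
    hence "collinear (insert z e)" by (simp add: e insert_commute)
    thus False using tri that unfolding triangulation_def by blast
  qed
  define Dc where "Dc = det2 (y - x) (c - x)"
  define Dd where "Dd = det2 (y - x) (d - x)"
  define Dw where "Dw = det2 (y - x) (w - x)"
  have "Dc \<noteq> 0" "Dd \<noteq> 0" "Dw \<noteq> 0" using nz ic id iw by (auto simp: Dc_def Dd_def Dw_def)
  have "\<not> Dc * Dd > 0"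
  proof
    assume "Dc * Dd > 0"
    hence "c = d" using same_side[OF hp, of c x y d] ic id nc nd e by (simp add: Dc_def Dd_def)
    thus False using cd by blast
  qed
  hence neg: "Dc * Dd < 0" using \<open>Dc \<noteq> 0\<close> \<open>Dd \<noteq> 0\<close> by (simp add: not_less order_le_less)
  have "(Dw * Dc) * (Dw * Dd) = Dw^2 * (Dc * Dd)" by (simp add: power2_eq_square algebra_simps)
  also have "\<dots> < 0" using neg \<open>Dw \<noteq> 0\<close> by (simp add: mult_pos_neg)
  finally have "Dw * Dc > 0 \<or> Dw * Dd > 0" by (auto simp: mult_less_0_iff)
  thus ?thesis
  proof
    assume "Dw * Dc > 0"
    thus ?thesis using same_side[OF hp, of w x y c] ic iw nc nw e by (simp add: Dc_def Dw_def)
  next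
    assume "Dw * Dd > 0"
    thus ?thesis using same_side[OF hp, of w x y d] id iw nd nw e by (simp add: Dd_def Dw_def)
  qed
qed

lemma mid_in: "(1/2) *\<^sub>R (a + b) \<in> convex hull {a, b :: pt}"
proof -
  have "(1/2) *\<^sub>R (a + b) = (1 - 1/2) *\<^sub>R a + (1/2) *\<^sub>R b" by (simp add: algebra_simps)
  thus ?thesis unfolding segment_convex_hull[symmetric] closed_segment_def by fastforce
qed

lemma face_mid2:
  fixes t S :: "pt set"
  assumes "card t = 3" "\<not> collinear t" "a \<in> t" "b \<in> t" "a \<noteq> b" "S \<subseteq> t"
    "(1/2) *\<^sub>R (a + b) \<in> convex hull S"
  shows "{a, b} \<subseteq> S"
proof -
  have "a \<in> S" using face_mid[OF assms] .
  moreover have "b \<in> S" using face_mid[OF assms(1,2,4,3) _ assms(6)] assms(5,7) by (simp add: add.commute)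
  ultimately show ?thesis by blast
qed

lemma perform_mem:
  "\<tau> \<in> perform T f \<longleftrightarrow> (\<tau> \<in> T \<and> \<not> eps f \<subseteq> \<tau>) \<or> (\<exists>x\<in>eps f. \<tau> = insert x (phi f))"
  unfolding perform_def by blast

lemma adm_facts:
  assumes "admissible P T f"
  shows "triangulation P T \<and> card (eps f) = 2 \<and> eps f \<in> edges T"
proof -
  have h: "eps f \<in> edges T" "triangulation P T"
    using assms[unfolded admissible_def, THEN conjunct2, THEN conjunct1]
      assms[unfolded admissible_def, THEN conjunct1] by auto
  moreover have "card (eps f) = 2" using h(1) unfolding edges_def by simp
  ultimately show ?thesis by simp
qed

lemma adm_ex:
  assumes "admissible P T f"
  shows "\<exists>c d. c \<noteq> d \<and> c \<notin> eps f \<and> d \<notin> eps f \<and> phi f = {c, d} \<and>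
        insert c (eps f) \<in> T \<and> insert d (eps f) \<in> T \<and>
        convex_quad (insert c (eps f)) (insert d (eps f))"
  using assms[unfolded admissible_def, THEN conjunct2, THEN conjunct2] .

lemma card4:
  assumes "card e = 2" "c \<noteq> d" "c \<notin> e" "d \<notin> e" "e \<union> {c, d} \<subseteq> \<tau>" "finite \<tau>"
  shows "card \<tau> \<ge> 4"
proof -
  have fe: "finite e" by (rule card_ge_0_finite) (simp add: assms(1))
  have "card (insert c (insert d e)) = 4" using assms(1-4) fe by simp
  moreover have "insert c (insert d e) \<subseteq> \<tau>" using assms(5) by blast
  hence "card (insert c (insert d e)) \<le> card \<tau>" by (rule card_mono[OF assms(6)])
  ultimately show ?thesis by simp
qed

lemma restrict_trancl:
  assumes "(i, h) \<in> A\<^sup>+" "i \<in> C" "\<And>x y. x \<in> C \<Longrightarrow> (x, y) \<in> A \<Longrightarrow> y \<in> C"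
  shows "(i, h) \<in> (A \<inter> C \<times> C)\<^sup>+"
proof -
  have "(i, h) \<in> (A \<inter> C \<times> C)\<^sup>+ \<and> h \<in> C" using assms(1)
  proof (induction rule: trancl_induct)
    case (base y)
    hence "y \<in> C" using assms(2,3) by blast
    hence "(i, y) \<in> A \<inter> C \<times> C" using base assms(2) by blast
    thus ?case using \<open>y \<in> C\<close> by blast
  next
    case (step y z)
    hence yC: "y \<in> C" and p: "(i, y) \<in> (A \<inter> C \<times> C)\<^sup>+" by blast+
    hence zC: "z \<in> C" using assms(3) step(2) by blast
    hence "(y, z) \<in> A \<inter> C \<times> C" using yC step(2) by blast
    hence "(i, z) \<in> (A \<inter> C \<times> C)\<^sup>+" using p by (simp add: trancl.trancl_into_trancl)
    thus ?case using zC by blast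
  qed
  thus ?thesis by blast
qed

theorem lemma6:
  fixes P :: "pt set" and Ti Tf :: "triangle set" and k :: nat
    and F :: "flip list" and Ts :: "triangle set list" and C :: "nat set" and i h :: nat
  assumes "triangulation P Ti" and "triangulation P Tf"
    and "solution P Ti Tf k F Ts"
    and "normalized Ti Tf F Ts"
    and "is_component F Ts C"
    and "i \<in> C" and "h \<in> C" and "i < h"
    and "phi (F ! i) = eps (F ! h) \<or>
         (\<exists>j. i < j \<and> j \<le> h \<and> share_triangle (Ts ! j) (phi (F ! i)) (eps (F ! h)))"
  shows "(i, h) \<in> (arcs F Ts \<inter> C \<times> C)\<^sup>+"
proof -
  define n where "n = length F"
  define A where "A = arcs F Ts"
  have sol: "valid_seq P Ti F Ts" "last Ts = Tf" using assms(3) unfolding solution_def by auto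
  have lenTs: "length Ts = Suc n" using sol(1) unfolding valid_seq_def n_def by simp
  have adm: "\<And>t. t < n \<Longrightarrow> admissible P (Ts ! t) (F ! t)"
    and perf: "\<And>t. t < n \<Longrightarrow> Ts ! Suc t = perform (Ts ! t) (F ! t)"
    using sol(1) unfolding valid_seq_def n_def by auto
  have tri: "triangulation P (Ts ! t)" if "t \<le> n" for t
  proof (cases "t < n")
    case True thus ?thesis using adm[OF True] unfolding admissible_def by blast
  next
    case False
    hence "t = n" using that by simp
    moreover have "last Ts = Ts ! n" using lenTs by (metis diff_Suc_1 last_conv_nth list.size(3) nat.distinct(1))
    ultimately show ?thesis using sol(2) assms(2) by simp
  qed
  have tri3: "card \<tau> = 3" "\<not> collinear \<tau>" "finite \<tau>" if "t \<le> n" "\<tau> \<in> Ts ! t" for t \<tau>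
    using tri[OF that(1)] that(2) unfolding triangulation_def by (auto intro: card_ge_0_finite)
  have hp: "convex hull \<tau>1 \<inter> convex hull \<tau>2 = convex hull (\<tau>1 \<inter> \<tau>2)"
    if "t \<le> n" "\<tau>1 \<in> Ts ! t" "\<tau>2 \<in> Ts ! t" for t \<tau>1 \<tau>2
    using tri[OF that(1)] that(2,3) unfolding triangulation_def by blast
  have hn: "h < n"
  proof -
    obtain i0 where i0: "i0 < length F" "C = {j. (i0, j) \<in> (arcs F Ts \<union> (arcs F Ts)\<inverse>)\<^sup>*}"
      using assms(5) unfolding is_component_def by blast
    have "(i0, h) \<in> (arcs F Ts \<union> (arcs F Ts)\<inverse>)\<^sup>*" using assms(7) i0(2) by blast
    hence "h < length F"
    proof (induction rule: rtrancl_induct)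
      case base thus ?case using i0(1) .
    next
      case (step y z) thus ?case unfolding arcs_def by auto
    qed
    thus ?thesis unfolding n_def .
  qed
  define born where "born \<tau> t \<longleftrightarrow> (\<exists>r. (i, r) \<in> A\<^sup>* \<and> r < t \<and> phi (F ! r) \<subseteq> \<tau> \<and>
                                    (\<forall>u. r < u \<and> u \<le> t \<longrightarrow> \<tau> \<in> Ts ! u))" for \<tau> t
  have K: "(i, t) \<in> A\<^sup>*" if t: "t < n" and b: "born \<tau> t" and et: "eps (F ! t) \<subseteq> \<tau>" for t \<tau>
  proof -
    obtain r where r: "(i, r) \<in> A\<^sup>*" "r < t" "phi (F ! r) \<subseteq> \<tau>" "\<forall>u. r < u \<and> u \<le> t \<longrightarrow> \<tau> \<in> Ts ! u"
      using b unfolding born_def by blast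
    have \<tau>t: "\<tau> \<in> Ts ! t" using r by auto
    obtain c d where "card (eps (F ! r)) = 2" "c \<noteq> d" "phi (F ! r) = {c, d}"
      using adm_facts[OF adm[of r]] adm_ex[OF adm[of r]] r(2) t by (meson less_trans)
    hence cphi: "card (phi (F ! r)) = 2" by simp
    have ceps: "card (eps (F ! t)) = 2" using adm_facts[OF adm[OF t]] adm_ex[OF adm[OF t]] by blast
    have nop: "\<not> (\<exists>p. r < p \<and> p < t \<and> eps (F ! p) = phi (F ! r))"
    proof
      assume "\<exists>p. r < p \<and> p < t \<and> eps (F ! p) = phi (F ! r)"
      then obtain p where p: "r < p" "p < t" "eps (F ! p) = phi (F ! r)" by blast
      have pn: "p < n" using p t by simp
      have "\<tau> \<in> Ts ! Suc p" using r(4) p by auto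
      hence "\<tau> \<in> perform (Ts ! p) (F ! p)" using perf[OF pn] by simp
      hence "\<exists>x\<in>eps (F ! p). \<tau> = insert x (phi (F ! p))"
        using p(3) r(3) unfolding perform_mem by blast
      then obtain x where x: "x \<in> eps (F ! p)" "\<tau> = insert x (phi (F ! p))" by blast
      obtain c' d' where cd': "card (eps (F ! p)) = 2" "c' \<noteq> d'" "c' \<notin> eps (F ! p)" "d' \<notin> eps (F ! p)"
        "phi (F ! p) = {c', d'}"
        using adm_facts[OF adm[OF pn]] adm_ex[OF adm[OF pn]] by blast
      have "eps (F ! p) \<union> {c', d'} \<subseteq> \<tau>" using p(3) r(3) x cd'(5) by auto
      hence "card \<tau> \<ge> 4" using card4[OF cd'(1-4)] tri3(3)[OF _ \<tau>t] t by simp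
      thus False using tri3(1)[OF _ \<tau>t] t by simp
    qed
    have "phi (F ! r) = eps (F ! t) \<or> share_triangle (Ts ! t) (phi (F ! r)) (eps (F ! t))"
      unfolding share_triangle_def using cphi ceps \<tau>t r(3) et by blast
    hence "(r, t) \<in> A" unfolding A_def arcs_def using r(2) t nop n_def by auto
    thus ?thesis using r(1) by simp
  qed
  have bornNew: "born \<tau> (Suc t)" if "(i, t) \<in> A\<^sup>*" "\<tau> \<in> Ts ! Suc t" "phi (F ! t) \<subseteq> \<tau>" for t \<tau>
    unfolding born_def using that by (rule_tac x=t in exI) (auto simp: le_Suc_eq)
  have bornPers: "born \<tau> (Suc t)" if "born \<tau> t" "\<tau> \<in> Ts ! Suc t" for t \<tau>
    using that unfolding born_def by (auto simp: le_Suc_eq)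
  define M where "M z t \<longleftrightarrow> (\<forall>\<tau>\<in>Ts ! t. z \<in> convex hull \<tau> \<longrightarrow> born \<tau> t)" for z t
  have Mstep: "M z (Suc t)" if t: "t < n" and m: "M z t" for z t
    unfolding M_def
  proof (intro ballI impI)
    fix \<tau> assume \<tau>: "\<tau> \<in> Ts ! Suc t" and z: "z \<in> convex hull \<tau>"
    have "\<tau> \<in> perform (Ts ! t) (F ! t)" using \<tau> perf[OF t] by simp
    hence "(\<tau> \<in> Ts ! t \<and> \<not> eps (F ! t) \<subseteq> \<tau>) \<or> (\<exists>x\<in>eps (F ! t). \<tau> = insert x (phi (F ! t)))"
      by (simp add: perform_mem)
    thus "born \<tau> (Suc t)"
    proof
      assume "\<tau> \<in> Ts ! t \<and> \<not> eps (F ! t) \<subseteq> \<tau>"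
      thus ?thesis using m z \<tau> bornPers unfolding M_def by blast
    next
      assume "\<exists>x\<in>eps (F ! t). \<tau> = insert x (phi (F ! t))"
      then obtain x where x: "x \<in> eps (F ! t)" "\<tau> = insert x (phi (F ! t))" by blast
      obtain c d where cd: "phi (F ! t) = {c, d}" "insert c (eps (F ! t)) \<in> Ts ! t"
        "insert d (eps (F ! t)) \<in> Ts ! t" "convex_quad (insert c (eps (F ! t))) (insert d (eps (F ! t)))"
        using adm_facts[OF adm[OF t]] adm_ex[OF adm[OF t]] by blast
      let ?t1 = "insert c (eps (F ! t))" and ?t2 = "insert d (eps (F ! t))"
      have cv: "convex (convex hull ?t1 \<union> convex hull ?t2)" using cd(4) unfolding convex_quad_def by blast
      have "\<tau> \<subseteq> convex hull ?t1 \<union> convex hull ?t2" using x cd(1) by (auto intro: hull_inc)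
      hence "convex hull \<tau> \<subseteq> convex hull ?t1 \<union> convex hull ?t2" using cv by (simp add: hull_minimal)
      hence "z \<in> convex hull ?t1 \<or> z \<in> convex hull ?t2" using z by blast
      hence "born ?t1 t \<or> born ?t2 t" using m cd(2,3) unfolding M_def by blast
      hence "(i, t) \<in> A\<^sup>*" using K[OF t] by blast
      thus ?thesis using bornNew \<tau> x(2) by blast
    qed
  qed
  have Mmulti: "M z t1" if "t0 \<le> t1" "t1 \<le> n" "M z t0" for z t0 t1
    using that
  proof (induction t1)
    case 0 thus ?case by simp
  next
    case (Suc t1)
    show ?case
    proof (cases "t0 = Suc t1")
      case True thus ?thesis using Suc by simp
    next
      case False thus ?thesis using Suc Mstep[of t1 z] by simp
    qed
  qed
  define g where "g = eps (F ! h)"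
  have gedge: "g \<in> edges (Ts ! h)" using adm_facts[OF adm[OF hn]] g_def by blast
  obtain a b where gab: "g = {a, b}" "a \<noteq> b" using gedge unfolding edges_def by (auto simp: card_2_iff)
  define mg where "mg = (1/2) *\<^sub>R (a + b)"
  define D where "D t \<longleftrightarrow> (\<exists>\<tau>\<in>Ts ! t. born \<tau> t \<and> g \<subseteq> \<tau>) \<or> M mg t" for t
  have Dstep: "D (Suc t)" if t: "t < n" and d: "D t" for t
  proof -
    have pm: "\<And>\<tau>. \<tau> \<in> Ts ! Suc t \<longleftrightarrow> (\<tau> \<in> Ts ! t \<and> \<not> eps (F ! t) \<subseteq> \<tau>) \<or> (\<exists>x\<in>eps (F ! t). \<tau> = insert x (phi (F ! t)))"
      using perf[OF t] perform_mem by simp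
    obtain c d where cd: "card (eps (F ! t)) = 2" "c \<noteq> d" "c \<notin> eps (F ! t)" "d \<notin> eps (F ! t)"
      "phi (F ! t) = {c, d}" "insert c (eps (F ! t)) \<in> Ts ! t" "insert d (eps (F ! t)) \<in> Ts ! t"
      using adm_facts[OF adm[OF t]] adm_ex[OF adm[OF t]] by blast
    from d[unfolded D_def] show ?thesis
    proof
      assume "M mg t" thus ?thesis using Mstep[OF t] unfolding D_def by blast
    next
      assume "\<exists>\<tau>\<in>Ts ! t. born \<tau> t \<and> g \<subseteq> \<tau>"
      then obtain \<tau> where \<tau>: "\<tau> \<in> Ts ! t" "born \<tau> t" "g \<subseteq> \<tau>" by blast
      show ?thesis
      proof (cases "eps (F ! t) \<subseteq> \<tau>")
        case False
        hence "\<tau> \<in> Ts ! Suc t" using pm \<tau>(1) by blast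
        thus ?thesis using bornPers \<tau> unfolding D_def by blast
      next
        case True
        have Rt: "(i, t) \<in> A\<^sup>*" using K[OF t \<tau>(2) True] .
        show ?thesis
        proof (cases "eps (F ! t) = g")
          case True
          have "M mg (Suc t)" unfolding M_def
          proof (intro ballI impI)
            fix \<tau>' assume \<tau>': "\<tau>' \<in> Ts ! Suc t" and z: "mg \<in> convex hull \<tau>'"
            show "born \<tau>' (Suc t)"
            proof (cases "\<tau>' \<in> Ts ! t \<and> \<not> eps (F ! t) \<subseteq> \<tau>'")
              case True
              have "mg \<in> convex hull \<tau>" using mid_in[of a b] hull_mono[OF \<tau>(3)] gab(1) mg_def by blast
              hence "mg \<in> convex hull (\<tau> \<inter> \<tau>')" using hp[of t \<tau> \<tau>'] t \<tau>(1) True z by auto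
              moreover have tl: "t \<le> n" using t by simp
              moreover have "a \<in> \<tau>" "b \<in> \<tau>" using gab(1) \<tau>(3) by auto
              ultimately have "{a, b} \<subseteq> \<tau> \<inter> \<tau>'"
                using face_mid2[OF tri3(1)[OF tl \<tau>(1)] tri3(2)[OF tl \<tau>(1)], of a b "\<tau> \<inter> \<tau>'"] gab(2)
                unfolding mg_def by blast
              thus ?thesis using True \<open>eps (F ! t) = g\<close> gab by blast
            next
              case False
              then obtain x where "x \<in> eps (F ! t)" "\<tau>' = insert x (phi (F ! t))" using pm \<tau>' by blast
              thus ?thesis using bornNew[OF Rt \<tau>'] by blast
            qed
          qed
          thus ?thesis unfolding D_def by blast
        next
          case False
          have c3: "card \<tau> = 3" using tri3(1)[of t \<tau>] t \<tau>(1) by simp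
          have fe: "finite (eps (F ! t))" using cd(1) by (metis card.infinite zero_neq_numeral)
          have "card (\<tau> - eps (F ! t)) = 1" using c3 cd(1) True by (simp add: card_Diff_subset fe)
          then obtain w where w: "\<tau> - eps (F ! t) = {w}" by (meson card_1_singletonE)
          hence \<tau>w: "\<tau> = insert w (eps (F ! t))" "w \<notin> eps (F ! t)" using True by blast+
          have "w = c \<or> w = d"
            using three_tri[OF tri[of t] cd(1) cd(6) cd(7) _ cd(3) cd(4) \<tau>w(2) cd(2)] \<tau>w(1) \<tau>(1) t by simp
          have "w \<in> g"
          proof (rule ccontr)
            assume "w \<notin> g"
            hence "g \<subseteq> eps (F ! t)" using \<tau>(3) \<tau>w(1) by blast
            moreover have "card g = 2" using gab by simp
            ultimately have "g = eps (F ! t)" using cd(1) fe by (simp add: card_subset_eq)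
            thus False using False by simp
          qed
          have "\<exists>x. x \<in> eps (F ! t) \<and> g = {w, x}"
          proof (cases "w = a")
            case True
            hence "b \<in> eps (F ! t)" using gab \<tau>(3) \<tau>w(1) by blast
            thus ?thesis using True gab(1) by blast
          next
            case False
            hence "w = b" using \<open>w \<in> g\<close> gab(1) by blast
            hence "a \<in> eps (F ! t)" using gab \<tau>(3) \<tau>w(1) by blast
            thus ?thesis using \<open>w = b\<close> gab(1) by blast
          qed
          then obtain x where x: "x \<in> eps (F ! t)" "g = {w, x}" by blast
          have new: "insert x (phi (F ! t)) \<in> Ts ! Suc t" using pm x(1) by blast
          have "g \<subseteq> insert x (phi (F ! t))" using x(2) cd(5) \<open>w = c \<or> w = d\<close> by auto
          moreover have "born (insert x (phi (F ! t))) (Suc t)" using bornNew[OF Rt new subset_insertI] .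
          ultimately show ?thesis using new unfolding D_def by blast
        qed
      qed
    qed
  qed
  have Dmulti: "D t1" if "t0 \<le> t1" "t1 \<le> n" "D t0" for t0 t1
    using that
  proof (induction t1)
    case 0 thus ?case by simp
  next
    case (Suc t1)
    show ?case
    proof (cases "t0 = Suc t1")
      case True thus ?thesis using Suc by simp
    next
      case False thus ?thesis using Suc Dstep[of t1] by simp
    qed
  qed
  have Dstart: "\<exists>t0. t0 \<le> h \<and> D t0"
  proof -
    have itn: "i < n" using assms(8) hn by simp
    obtain c d where cd: "card (eps (F ! i)) = 2" "phi (F ! i) = {c, d}" "c \<noteq> d"
      using adm_facts[OF adm[OF itn]] adm_ex[OF adm[OF itn]] by blast
    obtain x where x: "x \<in> eps (F ! i)" using cd(1) by (metis card.empty ex_in_conv zero_neq_numeral)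
    define N where "N = insert x (phi (F ! i))"
    have N: "N \<in> Ts ! Suc i" using perf[OF itn] perform_mem x N_def by blast
    have Ri: "(i, i) \<in> A\<^sup>*" by simp
    have bN: "born N (Suc i)" using bornNew[OF Ri N] N_def by blast
    from assms(9) show ?thesis
    proof
      assume "phi (F ! i) = eps (F ! h)"
      hence "D (Suc i)" unfolding D_def using N bN N_def g_def by blast
      thus ?thesis using assms(8) by (intro exI[of _ "Suc i"]) simp
    next
      assume "\<exists>j. i < j \<and> j \<le> h \<and> share_triangle (Ts ! j) (phi (F ! i)) (eps (F ! h))"
      then obtain j \<tau>0 where j: "i < j" "j \<le> h" "\<tau>0 \<in> Ts ! j" "phi (F ! i) \<subseteq> \<tau>0" "g \<subseteq> \<tau>0"
        unfolding share_triangle_def g_def by blast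
      define mc where "mc = (1/2) *\<^sub>R (c + d)"
      have Si: "Suc i \<le> n" using itn by simp
      have "M mc (Suc i)" unfolding M_def
      proof (intro ballI impI)
        fix \<tau> assume \<tau>: "\<tau> \<in> Ts ! Suc i" and z: "mc \<in> convex hull \<tau>"
        have "mc \<in> convex hull N" using mid_in[of c d] hull_mono[of "{c,d}" N] cd(2) N_def mc_def by auto
        hence "mc \<in> convex hull (N \<inter> \<tau>)" using hp[OF Si N \<tau>] z by auto
        moreover have "c \<in> N" "d \<in> N" using cd(2) N_def by auto
        ultimately have "{c, d} \<subseteq> N \<inter> \<tau>"
          using face_mid2[OF tri3(1)[OF Si N] tri3(2)[OF Si N], of c d "N \<inter> \<tau>"] cd(3)
          unfolding mc_def by blast
        hence "phi (F ! i) \<subseteq> \<tau>" using cd(2) by blast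
        thus "born \<tau> (Suc i)" using bornNew[OF Ri \<tau>] by simp
      qed
      hence "M mc j" using Mmulti[of "Suc i" j mc] j hn by simp
      moreover have "mc \<in> convex hull \<tau>0" using mid_in[of c d] hull_mono[OF j(4)] cd(2) mc_def by auto
      ultimately have "born \<tau>0 j" using j(3) unfolding M_def by blast
      hence "D j" unfolding D_def using j by blast
      thus ?thesis using j by blast
    qed
  qed
  then obtain t0 where "t0 \<le> h" "D t0" by blast
  hence Dh: "D h" using Dmulti hn by simp
  obtain \<tau> where \<tau>: "\<tau> \<in> Ts ! h" "g \<subseteq> \<tau>" using gedge unfolding edges_def by blast
  have "(i, h) \<in> A\<^sup>*"
    using Dh unfolding D_def
  proof
    assume "\<exists>\<tau>\<in>Ts ! h. born \<tau> h \<and> g \<subseteq> \<tau>"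
    thus ?thesis using K[OF hn] g_def by blast
  next
    assume "M mg h"
    moreover have "mg \<in> convex hull \<tau>"
      using mid_in[of a b] hull_mono[OF \<tau>(2)] gab(1) mg_def by blast
    ultimately have "born \<tau> h" using \<tau>(1) unfolding M_def by blast
    thus ?thesis using K[OF hn] \<tau>(2) g_def by blast
  qed
  hence tr: "(i, h) \<in> A\<^sup>+" using assms(8) by (metis less_irrefl rtranclD)
  have cl: "y \<in> C" if "x \<in> C" "(x, y) \<in> A" for x y
  proof -
    obtain i0 where "C = {j. (i0, j) \<in> (arcs F Ts \<union> (arcs F Ts)\<inverse>)\<^sup>*}"
      using assms(5) unfolding is_component_def by blast
    thus ?thesis using that unfolding A_def by (auto intro: rtrancl_into_rtrancl)
  qed
  have "(i, h) \<in> (A \<inter> C \<times> C)\<^sup>+" using restrict_trancl[OF tr assms(6) cl] .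
  thus ?thesis unfolding A_def .
qed

end
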